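(* Let $a,b,c,d>0$ and let $C_3=\{x=(x_1,x_2,x_3)\in\mathbb R^3:\ x_3>\varphi(x_1,x_2)\}$, where $$\varphi(x_1,x_2)=\begin{cases} ax_1+bx_2, & x_1>0,\ x_2>0,\\ -cx_1+bx_2, & x_1<0,\ x_2>0,\\ -cx_1-dx_2, & x_1<0,\ x_2<0,\\ ax_1-dx_2, & x_1>0,\ x_2<0.\end{cases}$$ Then for every $z=(z_1,z_2,z_3)\in\mathbb C^3$ with $\operatorname{Im} z$ in the interior of the dual cone $C_3^*=\{y\in\mathbb R^3: x\cdot y\ge 0\ \forall x\in C_3\}$, the Bochner kernel $$B_3(z)=\int_{C_3} e^{i x\cdot z}\,dx,\qquad x\cdot z=x_1z_1+x_2z_2+x_3z_3,$$ is given by $$B_3(z)=-\frac{i(a+c)(b+d)\,z_3}{(z_1+az_3)(z_2+bz_3)(z_1-cz_3)(z_2-dz_3)}.$$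
   Context: $C_3$ is a convex cone in $\mathbb R^3$ (a four-faced cone) not containing a whole straight line; its Bochner kernel is the integral above, which converges absolutely when $\operatorname{Im}z$ lies in the interior of the dual cone. *)

theory Defs
  imports "HOL-Analysis.Analysis"
begin

definition phi :: "real \<Rightarrow> real \<Rightarrow> real \<Rightarrow> real \<Rightarrow> real \<Rightarrow> real \<Rightarrow> real" where
  "phi a b c d x1 x2 =
     (if x1 > 0 \<and> x2 > 0 then a * x1 + b * x2
      else if x1 < 0 \<and> x2 > 0 then - c * x1 + b * x2
      else if x1 < 0 \<and> x2 < 0 then - c * x1 - d * x2
      else a * x1 - d * x2)"

text \<open>The cone C_3: points with x3 > phi(x1,x2), where phi is defined (x1, x2 nonzero).\<close>
definition C3 :: "real \<Rightarrow> real \<Rightarrow> real \<Rightarrow> real \<Rightarrow> (real \<times> real \<times> real) set" where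
  "C3 a b c d = {(x1, x2, x3). x1 \<noteq> 0 \<and> x2 \<noteq> 0 \<and> x3 > phi a b c d x1 x2}"

definition dual_cone :: "(real \<times> real \<times> real) set \<Rightarrow> (real \<times> real \<times> real) set" where
  "dual_cone C = {y. \<forall>x\<in>C. x \<bullet> y \<ge> 0}"

definition Im3 :: "complex \<times> complex \<times> complex \<Rightarrow> real \<times> real \<times> real" where
  "Im3 z = (Im (fst z), Im (fst (snd z)), Im (snd (snd z)))"

definition cdot3 :: "real \<times> real \<times> real \<Rightarrow> complex \<times> complex \<times> complex \<Rightarrow> complex" where
  "cdot3 x z = of_real (fst x) * fst z + of_real (fst (snd x)) * fst (snd z)
              + of_real (snd (snd x)) * snd (snd z)"

definition bochner_kernel :: "(real \<times> real \<times> real) set \<Rightarrow> complex \<times> complex \<times> complex \<Rightarrow> complex" where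
  "bochner_kernel C z = (\<integral>x\<in>C. exp (\<i> * cdot3 x z) \<partial>lborel)"

end

theory Submission imports Defs begin


definition ee :: "real \<Rightarrow> complex \<Rightarrow> complex" where
  "ee t w = exp (\<i> * (of_real t * w))"

lemma norm_ee: "norm (ee t w) = exp (- (t * Im w))"
  by (simp add: ee_def norm_exp_eq_Re)

lemma real_exp_Ioi:
  fixes eta p :: real
  assumes "eta > 0"
  shows "set_integrable lborel {p<..} (\<lambda>t. exp (- (t * eta)))"
proof -
  have "set_integrable lborel (einterval (ereal p) \<infinity>) (\<lambda>t. exp (- (t * eta)))"
  proof (rule interval_integral_FTC_nonneg(1)[where F = "\<lambda>t. - exp (- (t * eta)) / eta"
        and A = "- exp (- (p * eta)) / eta" and B = 0])
    show "ereal p < \<infinity>" by simp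
    show "DERIV (\<lambda>t. - exp (- (t * eta)) / eta) x :> exp (- (x * eta))" for x
      using assms by (auto intro!: derivative_eq_intros)
    show "isCont (\<lambda>t. exp (- (t * eta))) x" for x by (intro continuous_intros)
    show "AE x in lborel. ereal p < ereal x \<longrightarrow> ereal x < \<infinity> \<longrightarrow> 0 \<le> exp (- (x * eta))" by simp
    show "(((\<lambda>t. - exp (- (t * eta)) / eta) \<circ> real_of_ereal) \<longlongrightarrow> - exp (- (p * eta)) / eta) (at_right (ereal p))"
      using assms unfolding ereal_tendsto_simps by (intro tendsto_intros) auto
    have *: "((\<lambda>t. exp (- (t * eta))) \<longlongrightarrow> 0) at_top"
      using assms by real_asymp
    show "(((\<lambda>t. - exp (- (t * eta)) / eta) \<circ> real_of_ereal) \<longlongrightarrow> 0) (at_left \<infinity>)"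
      unfolding ereal_tendsto_simps using tendsto_divide[OF tendsto_minus[OF *] tendsto_const, of eta] assms by simp
  qed
  then show ?thesis by simp
qed

lemma L_pos:
  fixes p :: real and w :: complex
  assumes "Im w > 0"
  shows "integrable lborel (\<lambda>t. indicator {p<..} t *\<^sub>R ee t w)"
    "(\<integral>t. indicator {p<..} t *\<^sub>R ee t w \<partial>lborel) = \<i> * ee p w / w"
proof -
  have w0: "w \<noteq> 0" using assms by auto
  have si: "set_integrable lborel {p<..} (\<lambda>t. ee t w)"
  proof (rule set_integrable_bound[OF real_exp_Ioi[OF assms, of p]])
    show "set_borel_measurable lborel {p<..} (\<lambda>t. ee t w)" unfolding ee_def set_borel_measurable_def by measurable
    show "AE x in lborel. x \<in> {p<..} \<longrightarrow> norm (ee x w) \<le> norm (exp (- (x * Im w)))"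
      by (simp add: norm_ee)
  qed
  then show "integrable lborel (\<lambda>t. indicator {p<..} t *\<^sub>R ee t w)"
    by (simp add: set_integrable_def)
  have "(LBINT t=ereal p..\<infinity>. ee t w) = 0 - ee p w / (\<i> * w)"
  proof (rule interval_integral_FTC_integrable[where F = "\<lambda>t. ee t w / (\<i> * w)"])
    show "ereal p < \<infinity>" by simp
    show "((\<lambda>t. ee t w / (\<i> * w)) has_vector_derivative ee x w) (at x)" for x
    proof -
      have "((\<lambda>u. exp (\<i> * (u * w)) / (\<i> * w)) has_field_derivative exp (\<i> * (of_real x * w))) (at (of_real x))"
        using w0 by (auto intro!: derivative_eq_intros simp: algebra_simps)
      then show ?thesis unfolding ee_def by (rule has_vector_derivative_real_field)
    qed
    show "isCont (\<lambda>t. ee t w) x" for x unfolding ee_def by (intro continuous_intros)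
    show "set_integrable lborel (einterval (ereal p) \<infinity>) (\<lambda>t. ee t w)" using si by simp
    show "(((\<lambda>t. ee t w / (\<i> * w)) \<circ> real_of_ereal) \<longlongrightarrow> ee p w / (\<i> * w)) (at_right (ereal p))"
      using w0 unfolding ereal_tendsto_simps ee_def by (intro tendsto_intros) auto
    have *: "((\<lambda>t. exp (- (t * Im w))) \<longlongrightarrow> 0) at_top"
      using assms by real_asymp
    have "((\<lambda>t. ee t w / (\<i> * w)) \<longlongrightarrow> 0) at_top"
    proof (rule tendsto_norm_zero_cancel)
      show "((\<lambda>t. norm (ee t w / (\<i> * w))) \<longlongrightarrow> 0) at_top"
        using tendsto_divide[OF * tendsto_const, of "norm w"]
        using w0 by (simp add: norm_divide norm_mult norm_ee)
    qed
    then show "(((\<lambda>t. ee t w / (\<i> * w)) \<circ> real_of_ereal) \<longlongrightarrow> 0) (at_left \<infinity>)"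
      unfolding ereal_tendsto_simps by simp
  qed
  then show "(\<integral>t. indicator {p<..} t *\<^sub>R ee t w \<partial>lborel) = \<i> * ee p w / w"
  proof -
    let ?X = "(\<integral>t. indicator {p<..} t *\<^sub>R ee t w \<partial>lborel)"
    from \<open>_ = _\<close> have H: "\<i> * (w * ?X) = - ee p w"
      using w0 by (simp add: interval_integral_Ioi set_lebesgue_integral_def field_simps)
    have "w * ?X = - \<i> * (\<i> * (w * ?X))" by simp
    also have "\<dots> = \<i> * ee p w" using H by simp
    finally show ?thesis using w0 by (simp add: field_simps)
  qed
qed



lemma L_neg:
  fixes w :: complex
  assumes "Im w < 0"
  shows "integrable lborel (\<lambda>t. indicator {..<0} t *\<^sub>R ee t w)"
    "(\<integral>t. indicator {..<0} t *\<^sub>R ee t w \<partial>lborel) = - \<i> / w"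
proof -
  let ?g = "\<lambda>t. indicator {0<..} t *\<^sub>R ee t (-w)"
  have g: "integrable lborel ?g" "integral\<^sup>L lborel ?g = \<i> * ee 0 (-w) / (-w)"
    using L_pos[of "-w" 0] assms by auto
  have eq: "(\<lambda>x. ?g (0 + (-1) * x)) = (\<lambda>t. indicator {..<0} t *\<^sub>R ee t w)"
    by (auto simp: indicator_def ee_def)
  show "integrable lborel (\<lambda>t. indicator {..<0} t *\<^sub>R ee t w)"
    using lborel_integrable_real_affine[OF g(1), of "-1" 0] eq by simp
  have "integral\<^sup>L lborel ?g = \<bar>-1\<bar> *\<^sub>R (\<integral>x. ?g (0 + (-1) * x) \<partial>lborel)"
    by (rule lborel_integral_real_affine) simp
  then show "(\<integral>t. indicator {..<0} t *\<^sub>R ee t w \<partial>lborel) = - \<i> / w"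
    using g(2) eq by (simp add: ee_def)
qed

lemma fubini3:
  fixes f :: "real \<times> real \<times> real \<Rightarrow> 'a::{banach,second_countable_topology}"
  assumes f[measurable]: "f \<in> borel_measurable lborel"
    and G2: "\<And>x1 x2. integrable lborel (\<lambda>x3. f (x1, x2, x3))"
    and G1: "\<And>x1. integrable lborel (\<lambda>x2. \<integral>x3. norm (f (x1, x2, x3)) \<partial>lborel)"
    and G0: "integrable lborel (\<lambda>x1. \<integral>x2. \<integral>x3. norm (f (x1, x2, x3)) \<partial>lborel \<partial>lborel)"
  shows "integrable lborel f"
    "integral\<^sup>L lborel f = (\<integral>x1. \<integral>x2. \<integral>x3. f (x1, x2, x3) \<partial>lborel \<partial>lborel \<partial>lborel)"
proof -
  have fm: "f \<in> borel_measurable (lborel \<Otimes>\<^sub>M lborel)" by (simp add: lborel_prod)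
  have inner: "integrable lborel (\<lambda>q. f (x1, q))" for x1
  proof -
    have "integrable (lborel \<Otimes>\<^sub>M lborel) (\<lambda>q. f (x1, q))"
    proof (rule lborel_pair.Fubini_integrable)
      show "(\<lambda>q. f (x1, q)) \<in> borel_measurable (lborel \<Otimes>\<^sub>M lborel)"
        by (simp add: lborel_prod)
      show "integrable lborel (\<lambda>x. \<integral>y. norm (f (x1, x, y)) \<partial>lborel)" by (rule G1)
      show "AE x in lborel. integrable lborel (\<lambda>y. f (x1, x, y))" using G2 by simp
    qed
    then show ?thesis by (simp add: lborel_prod)
  qed
  have eqn: "(\<integral>q. norm (f (x1, q)) \<partial>lborel) = (\<integral>x2. \<integral>x3. norm (f (x1, x2, x3)) \<partial>lborel \<partial>lborel)" for x1
  proof -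
    have "integrable (lborel \<Otimes>\<^sub>M lborel) (\<lambda>q. norm (f (x1, q)))"
      using inner[of x1] by (simp add: lborel_prod)
    from lborel_pair.integral_fst'[OF this] show ?thesis by (simp add: lborel_prod)
  qed
  have eqf: "(\<integral>q. f (x1, q) \<partial>lborel) = (\<integral>x2. \<integral>x3. f (x1, x2, x3) \<partial>lborel \<partial>lborel)" for x1
  proof -
    have "integrable (lborel \<Otimes>\<^sub>M lborel) (\<lambda>q. f (x1, q))"
      using inner[of x1] by (simp add: lborel_prod)
    from lborel_pair.integral_fst'[OF this] show ?thesis by (simp add: lborel_prod)
  qed
  have I: "integrable (lborel \<Otimes>\<^sub>M lborel) f"
  proof (rule lborel_pair.Fubini_integrable)
    show "f \<in> borel_measurable (lborel \<Otimes>\<^sub>M lborel)" by (rule fm)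
    show "integrable lborel (\<lambda>x. \<integral>y. norm (f (x, y)) \<partial>lborel)"
      unfolding eqn by (rule G0)
    show "AE x in lborel. integrable lborel (\<lambda>y. f (x, y))" using inner by simp
  qed
  then show "integrable lborel f" by (simp add: lborel_prod)
  from lborel_pair.integral_fst'[OF I] show
    "integral\<^sup>L lborel f = (\<integral>x1. \<integral>x2. \<integral>x3. f (x1, x2, x3) \<partial>lborel \<partial>lborel \<partial>lborel)"
    by (simp add: lborel_prod eqf)
qed



lemma ee_add_t: "ee (s + t) w = ee s w * ee t w" by (simp add: ee_def distrib_right distrib_left exp_add)
lemma ee_diff_t: "ee (s - t) w = ee s w * ee t (-w)" by (simp add: ee_def left_diff_distrib exp_diff exp_minus field_simps)
lemma ee_mult_t: "ee (r * t) w = ee t (of_real r * w)" by (simp add: ee_def mult_ac)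
lemma ee_minus_t: "ee (- t) w = ee t (- w)" by (simp add: ee_def)
lemma ee_add_w: "ee t (v + w) = ee t v * ee t w" by (simp add: ee_def distrib_left exp_add)
lemma ee_diff_w: "ee t (v - w) = ee t v * ee t (- w)" by (simp add: ee_def right_diff_distrib exp_diff exp_minus field_simps)
lemma ee_zero_t[simp]: "ee 0 w = 1" by (simp add: ee_def)

definition FF where
  "FF a b c d z1 z2 z3 x = indicator (C3 a b c d) x *\<^sub>R exp (\<i> * cdot3 x (z1, z2, z3))"

definition V3 where
  "V3 a b c d z1 z2 z3 x1 x2 = (if x1 \<noteq> 0 \<and> x2 \<noteq> 0
     then ee x1 z1 * ee x2 z2 * (\<i> * ee (phi a b c d x1 x2) z3 / z3) else 0)"

definition KK where
  "KK a c z1 z3 x1 = (if x1 \<noteq> 0 then ee x1 z1 * ee (if x1 > 0 then a * x1 else - c * x1) z3 * \<i> / z3 else 0)"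

definition V2 where
  "V2 a b c d z1 z2 z3 x1 = KK a c z1 z3 x1 *
     (\<i> / (z2 + of_real b * z3) + - \<i> / (z2 - of_real d * z3))"

lemma step3:
  fixes a b c d :: real and z1 z2 z3 :: complex
  assumes "Im z3 > 0"
  shows "integrable lborel (\<lambda>x3. FF a b c d z1 z2 z3 (x1, x2, x3))"
    "(\<integral>x3. FF a b c d z1 z2 z3 (x1, x2, x3) \<partial>lborel) = V3 a b c d z1 z2 z3 x1 x2"
proof -
  let ?p = "phi a b c d x1 x2"
  have pw: "FF a b c d z1 z2 z3 (x1, x2, x3) = (if x1 \<noteq> 0 \<and> x2 \<noteq> 0 then
       ee x1 z1 * ee x2 z2 * (indicator {?p<..} x3 *\<^sub>R ee x3 z3) else 0)" for x3
    by (auto simp: FF_def C3_def indicator_def cdot3_def ee_def distrib_left exp_add)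
  show "integrable lborel (\<lambda>x3. FF a b c d z1 z2 z3 (x1, x2, x3))"
    unfolding pw using integrable_mult_right[OF L_pos(1)[OF assms, of ?p], of "ee x1 z1 * ee x2 z2"]
    by (cases "x1 \<noteq> 0 \<and> x2 \<noteq> 0") auto
  show "(\<integral>x3. FF a b c d z1 z2 z3 (x1, x2, x3) \<partial>lborel) = V3 a b c d z1 z2 z3 x1 x2"
    unfolding pw V3_def using integral_mult_right_zero[where c="ee x1 z1 * ee x2 z2" and f="\<lambda>t. indicator {?p<..} t *\<^sub>R ee t z3" and M=lborel] L_pos(2)[OF assms, of ?p]
    by (cases "x1 \<noteq> 0 \<and> x2 \<noteq> 0") auto
qed

lemma step2:
  fixes a b c d :: real and z1 z2 z3 :: complex
  assumes "Im (z2 + of_real b * z3) > 0" "Im (z2 - of_real d * z3) < 0"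
  shows "integrable lborel (\<lambda>x2. V3 a b c d z1 z2 z3 x1 x2)"
    "(\<integral>x2. V3 a b c d z1 z2 z3 x1 x2 \<partial>lborel) = V2 a b c d z1 z2 z3 x1"
proof -
  have pw: "V3 a b c d z1 z2 z3 x1 x2 = KK a c z1 z3 x1 *
     (indicator {0<..} x2 *\<^sub>R ee x2 (z2 + of_real b * z3) + indicator {..<0} x2 *\<^sub>R ee x2 (z2 - of_real d * z3))" for x2
    by (cases "x1 > 0"; cases "x1 < 0"; cases "x2 > 0"; cases "x2 < 0")
       (auto simp: V3_def KK_def phi_def indicator_def ee_add_t ee_diff_t ee_mult_t ee_minus_t ee_add_w ee_diff_w mult_ac)
  have i1: "integrable lborel (\<lambda>t. indicator {0<..} t *\<^sub>R ee t (z2 + of_real b * z3))"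
    and v1: "(\<integral>t. indicator {0<..} t *\<^sub>R ee t (z2 + of_real b * z3) \<partial>lborel) = \<i> / (z2 + of_real b * z3)"
    using L_pos[OF assms(1), of 0] by auto
  note i2 = L_neg(1)[OF assms(2)] and v2 = L_neg(2)[OF assms(2)]
  show "integrable lborel (\<lambda>x2. V3 a b c d z1 z2 z3 x1 x2)"
    unfolding pw by (intro integrable_mult_right Bochner_Integration.integrable_add i1 i2)
  show "(\<integral>x2. V3 a b c d z1 z2 z3 x1 x2 \<partial>lborel) = V2 a b c d z1 z2 z3 x1"
    unfolding pw V2_def
    by (simp add: Bochner_Integration.integral_add[OF i1 i2] v1 v2)
qed

lemma step1:
  fixes a b c d :: real and z1 z2 z3 :: complex
  assumes "Im (z1 + of_real a * z3) > 0" "Im (z1 - of_real c * z3) < 0"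
  shows "integrable lborel (\<lambda>x1. V2 a b c d z1 z2 z3 x1)"
    "(\<integral>x1. V2 a b c d z1 z2 z3 x1 \<partial>lborel) =
       (\<i> / (z2 + of_real b * z3) + - \<i> / (z2 - of_real d * z3)) * (\<i> / z3) *
       (\<i> / (z1 + of_real a * z3) + - \<i> / (z1 - of_real c * z3))"
proof -
  let ?S = "(\<i> / (z2 + of_real b * z3) + - \<i> / (z2 - of_real d * z3)) * (\<i> / z3)"
  have pw: "V2 a b c d z1 z2 z3 x1 = ?S *
     (indicator {0<..} x1 *\<^sub>R ee x1 (z1 + of_real a * z3) + indicator {..<0} x1 *\<^sub>R ee x1 (z1 - of_real c * z3))" for x1
    by (cases "x1 > 0"; cases "x1 < 0")
       (auto simp: V2_def KK_def indicator_def ee_add_t ee_diff_t ee_mult_t ee_minus_t ee_add_w ee_diff_w mult_ac)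
  have i1: "integrable lborel (\<lambda>t. indicator {0<..} t *\<^sub>R ee t (z1 + of_real a * z3))"
    and v1: "(\<integral>t. indicator {0<..} t *\<^sub>R ee t (z1 + of_real a * z3) \<partial>lborel) = \<i> / (z1 + of_real a * z3)"
    using L_pos[OF assms(1), of 0] by auto
  note i2 = L_neg(1)[OF assms(2)] and v2 = L_neg(2)[OF assms(2)]
  show "integrable lborel (\<lambda>x1. V2 a b c d z1 z2 z3 x1)"
    unfolding pw by (intro integrable_mult_right Bochner_Integration.integrable_add i1 i2)
  show "(\<integral>x1. V2 a b c d z1 z2 z3 x1 \<partial>lborel) = ?S *
       (\<i> / (z1 + of_real a * z3) + - \<i> / (z1 - of_real c * z3))"
    unfolding pw
    by (simp add: Bochner_Integration.integral_add[OF i1 i2] v1 v2)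
qed



lemma lim_nonneg:
  fixes A B :: real
  assumes "\<And>e. e > 0 \<Longrightarrow> A + e * B \<ge> 0"
  shows "A \<ge> 0"
proof (rule ccontr)
  assume "\<not> A \<ge> 0"
  hence A: "A < 0" by simp
  define e where "e = - A / (2 * (\<bar>B\<bar> + 1))"
  have e: "e > 0" unfolding e_def using A by (intro divide_pos_pos) auto
  have "e * B \<le> e * \<bar>B\<bar>" using e by (simp add: mult_left_mono)
  also have "e * \<bar>B\<bar> < - A / 2"
    using A by (simp add: e_def field_simps)
  finally have "A + e * B < 0" using A by simp
  with assms[OF e] show False by simp
qed

lemma dual_ineqs:
  fixes a b c d :: real
  assumes y: "(y1, y2, y3) \<in> dual_cone (C3 a b c d)"
  shows "y1 + a * y3 \<ge> 0" "c * y3 - y1 \<ge> 0" "y2 + b * y3 \<ge> 0" "d * y3 - y2 \<ge> 0"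
proof -
  have D: "x1 * y1 + x2 * y2 + x3 * y3 \<ge> 0" if "(x1, x2, x3) \<in> C3 a b c d" for x1 x2 x3
    using y that unfolding dual_cone_def by (auto simp: inner_prod_def)
  show "y1 + a * y3 \<ge> 0"
  proof (rule lim_nonneg[where B = "y2 + b * y3 + y3"])
    fix e :: real assume e: "e > 0"
    have "(1, e, a + b * e + e) \<in> C3 a b c d" using e by (simp add: C3_def phi_def)
    from D[OF this] show "y1 + a * y3 + e * (y2 + b * y3 + y3) \<ge> 0" by (simp add: algebra_simps)
  qed
  show "c * y3 - y1 \<ge> 0"
  proof (rule lim_nonneg[where B = "y2 + b * y3 + y3"])
    fix e :: real assume e: "e > 0"
    have "(-1, e, c + b * e + e) \<in> C3 a b c d" using e by (simp add: C3_def phi_def)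
    from D[OF this] show "c * y3 - y1 + e * (y2 + b * y3 + y3) \<ge> 0" by (simp add: algebra_simps)
  qed
  show "y2 + b * y3 \<ge> 0"
  proof (rule lim_nonneg[where B = "y1 + a * y3 + y3"])
    fix e :: real assume e: "e > 0"
    have "(e, 1, a * e + b + e) \<in> C3 a b c d" using e by (simp add: C3_def phi_def)
    from D[OF this] show "y2 + b * y3 + e * (y1 + a * y3 + y3) \<ge> 0" by (simp add: algebra_simps)
  qed
  show "d * y3 - y2 \<ge> 0"
  proof (rule lim_nonneg[where B = "y1 + a * y3 + y3"])
    fix e :: real assume e: "e > 0"
    have "(e, -1, a * e + d + e) \<in> C3 a b c d" using e by (simp add: C3_def phi_def)
    from D[OF this] show "d * y3 - y2 + e * (y1 + a * y3 + y3) \<ge> 0" by (simp add: algebra_simps)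
  qed
qed

lemma interior_ineqs:
  fixes a b c d :: real
  assumes y: "(y1, y2, y3) \<in> interior (dual_cone (C3 a b c d))"
  shows "y1 + a * y3 > 0" "c * y3 - y1 > 0" "y2 + b * y3 > 0" "d * y3 - y2 > 0"
proof -
  obtain e where e: "e > 0" "ball (y1, y2, y3) e \<subseteq> dual_cone (C3 a b c d)"
    using y by (meson mem_interior)
  have m: "(y1 + t, y2, y3) \<in> dual_cone (C3 a b c d)" "(y1, y2 + t, y3) \<in> dual_cone (C3 a b c d)"
    if "\<bar>t\<bar> < e" for t
    using e(2) that by (auto simp: dist_Pair_Pair dist_real_def subset_iff)
  have h: "\<bar>e/2\<bar> < e" "\<bar>-(e/2)\<bar> < e" using e by auto
  show "y1 + a * y3 > 0" using dual_ineqs(1)[OF m(1)[OF h(2)]] e by simp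
  show "c * y3 - y1 > 0" using dual_ineqs(2)[OF m(1)[OF h(1)]] e by simp
  show "y2 + b * y3 > 0" using dual_ineqs(3)[OF m(2)[OF h(2)]] e by simp
  show "d * y3 - y2 > 0" using dual_ineqs(4)[OF m(2)[OF h(1)]] e by simp
qed

lemma phi_meas[measurable]: "(\<lambda>p::real \<times> real. phi a b c d (fst p) (snd p)) \<in> borel_measurable (borel \<Otimes>\<^sub>M borel)"
  unfolding phi_def by measurable

lemma phi_meas2[measurable]:
  "(\<lambda>x::real \<times> real \<times> real. phi a b c d (fst x) (fst (snd x))) \<in> borel_measurable (borel \<Otimes>\<^sub>M (borel \<Otimes>\<^sub>M borel))"
proof -
  have "(\<lambda>x::real \<times> real \<times> real. (fst x, fst (snd x))) \<in> (borel \<Otimes>\<^sub>M (borel \<Otimes>\<^sub>M borel)) \<rightarrow>\<^sub>M (borel \<Otimes>\<^sub>M borel)"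
    by measurable
  from measurable_compose[OF this phi_meas[of a b c d]] show ?thesis by simp
qed

lemma C3_meas[measurable]: "C3 a b c d \<in> sets lborel"
proof -
  have "C3 a b c d = {x \<in> space (borel \<Otimes>\<^sub>M (borel \<Otimes>\<^sub>M borel)). fst x \<noteq> 0 \<and> fst (snd x) \<noteq> 0 \<and>
     phi a b c d (fst x) (fst (snd x)) < snd (snd x)}"
    by (auto simp: C3_def space_pair_measure)
  also have "\<dots> \<in> sets (borel \<Otimes>\<^sub>M (borel \<Otimes>\<^sub>M borel))" by measurable
  finally show ?thesis by (metis borel_prod sets_lborel)
qed



lemma FF_meas: "FF a b c d z1 z2 z3 \<in> borel_measurable lborel"
proof -
  have "continuous_on UNIV (\<lambda>x. exp (\<i> * cdot3 x (z1, z2, z3)))"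
    unfolding cdot3_def by (intro continuous_intros)
  then have m: "(\<lambda>x. exp (\<i> * cdot3 x (z1, z2, z3))) \<in> borel_measurable lborel"
    using borel_measurable_continuous_onI by simp
  have i: "indicator (C3 a b c d) \<in> borel_measurable lborel"
    using C3_meas by (rule borel_measurable_indicator)
  show ?thesis unfolding FF_def using borel_measurable_scaleR[OF i m] .
qed

lemma norm_FF: "norm (FF a b c d z1 z2 z3 x) =
   Re (FF a b c d (\<i> * of_real (Im z1)) (\<i> * of_real (Im z2)) (\<i> * of_real (Im z3)) x)"
  by (simp add: FF_def cdot3_def norm_exp_eq_Re Re_exp Im_exp indicator_def algebra_simps)

theorem lemma1:
  fixes a b c d :: real and z1 z2 z3 :: complex
  assumes "a > 0" "b > 0" "c > 0" "d > 0"
    and "Im3 (z1, z2, z3) \<in> interior (dual_cone (C3 a b c d))"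
  shows "set_integrable lborel (C3 a b c d) (\<lambda>x. exp (\<i> * cdot3 x (z1, z2, z3)))
    \<and> bochner_kernel (C3 a b c d) (z1, z2, z3) =
      - (\<i> * of_real ((a + c) * (b + d)) * z3) /
        ((z1 + of_real a * z3) * (z2 + of_real b * z3) * (z1 - of_real c * z3) * (z2 - of_real d * z3))"
proof -
  have y: "(Im z1, Im z2, Im z3) \<in> interior (dual_cone (C3 a b c d))"
    using assms(5) by (simp add: Im3_def)
  note ii = interior_ineqs[OF y]
  have Q1: "Im (z1 + of_real a * z3) > 0" and Q2: "Im (z1 - of_real c * z3) < 0"
    and Q3: "Im (z2 + of_real b * z3) > 0" and Q4: "Im (z2 - of_real d * z3) < 0"
    using ii by auto
  have y3: "Im z3 > 0"
  proof -
    have "(a + c) * Im z3 > 0" using ii(1,2) by (simp add: algebra_simps)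
    then show ?thesis using assms(1,3) by (simp add: zero_less_mult_iff)
  qed
  define w1 where "w1 = \<i> * of_real (Im z1)"
  define w2 where "w2 = \<i> * of_real (Im z2)"
  define w3 where "w3 = \<i> * of_real (Im z3)"
  have W1: "Im (w1 + of_real a * w3) > 0" and W2: "Im (w1 - of_real c * w3) < 0"
    and W3: "Im (w2 + of_real b * w3) > 0" and W4: "Im (w2 - of_real d * w3) < 0"
    and W5: "Im w3 > 0"
    using Q1 Q2 Q3 Q4 y3 by (auto simp: w1_def w2_def w3_def)
  let ?F = "FF a b c d z1 z2 z3"
  let ?G = "FF a b c d w1 w2 w3"
  have nF: "norm (?F x) = Re (?G x)" for x
    unfolding w1_def w2_def w3_def by (rule norm_FF)
  have G1: "(\<integral>x3. norm (?F (x1, x2, x3)) \<partial>lborel) = Re (V3 a b c d w1 w2 w3 x1 x2)" for x1 x2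
    unfolding nF using step3[OF W5, of a b c d w1 w2 x1 x2] by simp
  have G0: "(\<integral>x2. \<integral>x3. norm (?F (x1, x2, x3)) \<partial>lborel \<partial>lborel) = Re (V2 a b c d w1 w2 w3 x1)" for x1
    unfolding G1 using step2[OF W3 W4, of a c w1 x1] by simp
  have F2: "integrable lborel (\<lambda>x3. ?F (x1, x2, x3))" for x1 x2 by (rule step3(1)[OF y3])
  have F1: "integrable lborel (\<lambda>x2. \<integral>x3. norm (?F (x1, x2, x3)) \<partial>lborel)" for x1
      unfolding G1 using step2(1)[OF W3 W4, of a c w1 x1] by simp
  have F0: "integrable lborel (\<lambda>x1. \<integral>x2. \<integral>x3. norm (?F (x1, x2, x3)) \<partial>lborel \<partial>lborel)"
      unfolding G0 using step1(1)[OF W1 W2, of b d w2] by simp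
  note fub = fubini3[OF FF_meas F2 F1 F0]
  have val: "integral\<^sup>L lborel ?F =
       (\<i> / (z2 + of_real b * z3) + - \<i> / (z2 - of_real d * z3)) * (\<i> / z3) *
       (\<i> / (z1 + of_real a * z3) + - \<i> / (z1 - of_real c * z3))"
    unfolding fub(2) step3(2)[OF y3] step2(2)[OF Q3 Q4] step1(2)[OF Q1 Q2] ..
  have nz: "z3 \<noteq> 0" "z1 + of_real a * z3 \<noteq> 0" "z1 - of_real c * z3 \<noteq> 0"
     "z2 + of_real b * z3 \<noteq> 0" "z2 - of_real d * z3 \<noteq> 0"
    using y3 Q1 Q2 Q3 Q4 by (metis less_irrefl zero_complex.sel(2))+
  have alg: "(\<i> / (z2 + of_real b * z3) + - \<i> / (z2 - of_real d * z3)) * (\<i> / z3) *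
       (\<i> / (z1 + of_real a * z3) + - \<i> / (z1 - of_real c * z3)) =
      - (\<i> * of_real ((a + c) * (b + d)) * z3) /
        ((z1 + of_real a * z3) * (z2 + of_real b * z3) * (z1 - of_real c * z3) * (z2 - of_real d * z3))"
  proof -
    have S1: "\<i> / (z1 + of_real a * z3) + - \<i> / (z1 - of_real c * z3) =
        - \<i> * of_real (a + c) * z3 / ((z1 + of_real a * z3) * (z1 - of_real c * z3))"
      using nz by (simp add: divide_simps) (simp add: algebra_simps)
    have S2: "\<i> / (z2 + of_real b * z3) + - \<i> / (z2 - of_real d * z3) =
        - \<i> * of_real (b + d) * z3 / ((z2 + of_real b * z3) * (z2 - of_real d * z3))"
      using nz by (simp add: divide_simps) (simp add: algebra_simps)
    show ?thesis unfolding S1 S2 using nz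
      by (simp add: divide_simps)
  qed
  show ?thesis
  proof
    show "set_integrable lborel (C3 a b c d) (\<lambda>x. exp (\<i> * cdot3 x (z1, z2, z3)))"
      using fub(1) by (simp add: set_integrable_def FF_def)
    show "bochner_kernel (C3 a b c d) (z1, z2, z3) = - (\<i> * of_real ((a + c) * (b + d)) * z3) /
        ((z1 + of_real a * z3) * (z2 + of_real b * z3) * (z1 - of_real c * z3) * (z2 - of_real d * z3))"
    proof -
      have "bochner_kernel (C3 a b c d) (z1, z2, z3) = integral\<^sup>L lborel ?F"
        by (simp add: bochner_kernel_def set_lebesgue_integral_def FF_def[abs_def])
      then show ?thesis using val alg by simp
    qed
  qed
qed


end
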